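(* Let $G$ be a po-group. The po-group $\mathbb Z \overrightarrow{\times} G$ satisfies RDP if and only if $G$ is directed and satisfies RDP.
   Context: A po-group is a (not necessarily Abelian, additively written) group with a partial order $\le$ such that $a\le b$ implies $x+a+y\le x+b+y$; $G^+$ is its positive cone; $G$ is directed if any two elements have a common upper bound. $\mathbb Z \overrightarrow{\times} G$ is the group $\mathbb Z\times G$ (componentwise operation) with the lexicographic order: $(m,g)\le(n,h)$ iff $m<n$, or $m=n$ and $g\le h$. RDP: for all $a_1,a_2,b_1,b_2$ in the positive cone with $a_1+a_2=b_1+b_2$ there are positive $c_{11},c_{12},c_{21},c_{22}$ with $a_1=c_{11}+c_{12}$, $a_2=c_{21}+c_{22}$, $b_1=c_{11}+c_{21}$, $b_2=c_{12}+c_{22}$. *)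

theory Defs
  imports Main "HOL-Library.Product_Plus"
begin

definition po_group :: "('a::group_add \<Rightarrow> 'a \<Rightarrow> bool) \<Rightarrow> bool" where
  "po_group le \<longleftrightarrow>
     (\<forall>a. le a a) \<and>
     (\<forall>a b. le a b \<and> le b a \<longrightarrow> a = b) \<and>
     (\<forall>a b c. le a b \<and> le b c \<longrightarrow> le a c) \<and>
     (\<forall>a b x y. le a b \<longrightarrow> le (x + a + y) (x + b + y))"

definition pos_cone :: "('a::group_add \<Rightarrow> 'a \<Rightarrow> bool) \<Rightarrow> 'a set" where
  "pos_cone le = {x. le 0 x}"

definition directed :: "('a \<Rightarrow> 'a \<Rightarrow> bool) \<Rightarrow> bool" where
  "directed le \<longleftrightarrow> (\<forall>a b. \<exists>c. le a c \<and> le b c)"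

definition RDP :: "('a::group_add \<Rightarrow> 'a \<Rightarrow> bool) \<Rightarrow> bool" where
  "RDP le \<longleftrightarrow>
     (\<forall>a1 a2 b1 b2. a1 \<in> pos_cone le \<and> a2 \<in> pos_cone le \<and>
        b1 \<in> pos_cone le \<and> b2 \<in> pos_cone le \<and> a1 + a2 = b1 + b2 \<longrightarrow>
        (\<exists>c11 c12 c21 c22.
           c11 \<in> pos_cone le \<and> c12 \<in> pos_cone le \<and>
           c21 \<in> pos_cone le \<and> c22 \<in> pos_cone le \<and>
           a1 = c11 + c12 \<and> a2 = c21 + c22 \<and>
           b1 = c11 + c21 \<and> b2 = c12 + c22))"

text \<open>Lexicographic order on Z x G (the group structure on int \<times> 'a is componentwise,
from Product_Plus).\<close>

definition lex_le :: "('a \<Rightarrow> 'a \<Rightarrow> bool) \<Rightarrow> int \<times> 'a \<Rightarrow> int \<times> 'a \<Rightarrow> bool" where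
  "lex_le le p q \<longleftrightarrow> fst p < fst q \<or> (fst p = fst q \<and> le (snd p) (snd q))"

end

theory Submission
  imports Defs
begin

lemma po_refl: assumes "po_group le" shows "le a a"
proof -
  have t: "\<forall>a. le a a"
    using assms(1) unfolding po_group_def by (rule conjunct1)
  show ?thesis using t by blast
qed
lemma po_antisym: assumes "po_group le" "le a b" "le b a" shows "a = b"
proof -
  have t: "\<forall>a b. le a b \<and> le b a \<longrightarrow> a = b"
    using assms(1) unfolding po_group_def by (rule conjunct1[OF conjunct2])
  show ?thesis using t assms(2,3) by blast
qed
lemma po_trans: assumes "po_group le" "le a b" "le b c" shows "le a c"
proof -
  have t: "\<forall>a b c. le a b \<and> le b c \<longrightarrow> le a c"
    using assms(1) unfolding po_group_def by (rule conjunct1[OF conjunct2[OF conjunct2]])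
  show ?thesis using t assms(2,3) by blast
qed
lemma po_mono: assumes "po_group le" "le a b" shows "le (x + a + y) (x + b + y)"
proof -
  have t: "\<forall>a b x y. le a b \<longrightarrow> le (x + a + y) (x + b + y)"
    using assms(1) unfolding po_group_def by (rule conjunct2[OF conjunct2[OF conjunct2]])
  show ?thesis using t assms(2) by blast
qed

lemma po_monol: assumes "po_group le" "le a b" shows "le (x + a) (x + b)"
  using po_mono[OF assms, of x 0] by simp
lemma po_monor: assumes "po_group le" "le a b" shows "le (a + y) (b + y)"
  using po_mono[OF assms, of 0 y] by simp

lemma le_iff_pos: assumes "po_group le" shows "le a b \<longleftrightarrow> le 0 (-a + b)"
proof
  assume "le a b" then show "le 0 (-a + b)" using po_monol[OF assms, of a b "-a"] by simp
next
  assume "le 0 (-a + b)" then show "le a b" using po_monol[OF assms, of 0 "-a+b" a] by (simp add: add.assoc[symmetric])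
qed

lemma le_iff_pos': assumes "po_group le" shows "le a b \<longleftrightarrow> le 0 (b - a)"
proof
  assume "le a b" then show "le 0 (b - a)" using po_monor[OF assms, of a b "-a"] by simp
next
  assume "le 0 (b - a)" then show "le a b" using po_monor[OF assms, of 0 "b - a" a] by simp
qed

lemma le_neg: assumes "po_group le" "le a b" shows "le (-b) (-a)"
  using po_mono[OF assms, of "-a" "-b"] by (simp add: add.assoc)

definition decomp :: "'a::group_add \<Rightarrow> 'a \<Rightarrow> 'a \<Rightarrow> 'a \<Rightarrow> 'a \<Rightarrow> 'a \<Rightarrow> 'a \<Rightarrow> 'a \<Rightarrow> bool" where
  "decomp g1 g2 h1 h2 x11 x12 x21 x22 \<longleftrightarrow>
     g1 = x11 + x12 \<and> g2 = x21 + x22 \<and> h1 = x11 + x21 \<and> h2 = x12 + x22"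

lemma L0:
  fixes g1 :: "'a::group_add"
  assumes "g1 + g2 = h1 + h2"
  shows "decomp g1 g2 h1 h2 g1 0 (-g1 + h1) h2"
proof -
  have "-g1 + (h1 + h2) = g2" unfolding assms[symmetric] by (simp add: add.assoc[symmetric])
  then have "-g1 + h1 + h2 = g2" by (simp add: add.assoc)
  then show ?thesis by (simp add: decomp_def)
qed

lemma L0':
  fixes g1 :: "'a::group_add"
  assumes "g1 + g2 = h1 + h2"
  shows "decomp g1 g2 h1 h2 h1 (-h1 + g1) 0 g2"
proof -
  have "-h1 + (g1 + g2) = h2" unfolding assms by (simp add: add.assoc[symmetric])
  then have "-h1 + g1 + g2 = h2" by (simp add: add.assoc)
  then show ?thesis by (simp add: decomp_def add.assoc[symmetric])
qed

lemma comm_conj: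
  fixes a :: "'a::group_add"
  assumes "a + b = b + a" shows "-a + b = b - a"
proof -
  have "-a + (b + a) = -a + (a + b)" using assms by simp
  then have "-a + b + a = b" by (simp add: add.assoc)
  then show ?thesis by (simp add: eq_diff_eq)
qed

lemma complete:
  fixes g1 :: "'a::group_add"
  assumes "g1 + g2 = h1 + h2" "g1 = x11 + x12" "h1 = x11 + x21" "x12 + x21 = x21 + x12"
  shows "decomp g1 g2 h1 h2 x11 x12 x21 (-x21 + g2)"
proof -
  have "-h1 + (g1 + g2) = h2" unfolding assms(1) by (simp add: add.assoc[symmetric])
  then have h2: "h2 = -h1 + g1 + g2" by (simp add: add.assoc)
  have "-h1 + g1 = -x21 + x12" using assms(2,3) by (simp add: minus_add add.assoc[symmetric])
  also have "\<dots> = x12 - x21" using comm_conj[OF assms(4)[symmetric]] .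
  finally have "h2 = x12 + (-x21 + g2)" using h2 by (simp del: add_uminus_conv_diff add: add.assoc diff_conv_add_uminus)
  moreover have "g2 = x21 + (-x21 + g2)" by (simp add: add.assoc[symmetric])
  ultimately show ?thesis using assms(2,3) unfolding decomp_def by blast
qed

lemma complete':
  fixes g1 :: "'a::group_add"
  assumes "g1 + g2 = h1 + h2" "g2 = x21 + x22" "h2 = x12 + x22" "x12 + x21 = x21 + x12"
  shows "decomp g1 g2 h1 h2 (g1 - x12) x12 x21 x22"
proof -
  have h1: "h1 = g1 + g2 - h2" by (simp add: eq_diff_eq assms(1))
  also have "\<dots> = g1 + (x21 - x12)" unfolding assms(2,3)
    by (simp del: add_uminus_conv_diff add: diff_conv_add_uminus minus_add add.assoc)
  also have "\<dots> = g1 + (-x12 + x21)" using comm_conj[OF assms(4)] by simp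
  also have "\<dots> = (g1 - x12) + x21" by (simp del: add_uminus_conv_diff add: diff_conv_add_uminus add.assoc)
  finally have e: "h1 = (g1 - x12) + x21" .
  have e1: "g1 = (g1 - x12) + x12" by simp
  show ?thesis unfolding decomp_def using e e1 assms(2,3) by blast
qed

lemma cancel4:
  fixes c11 :: "'a::group_add"
  assumes "c11 + c12 + (c21 + c22) = c11 + c21 + (c12 + c22)"
  shows "c12 + c21 = c21 + c12"
proof -
  have "c11 + (c12 + c21 + c22) = c11 + (c21 + c12 + c22)" using assms by (simp add: add.assoc)
  then have "c12 + c21 + c22 = c21 + c12 + c22" by simp
  then show ?thesis by simp
qed

lemma RDP_D:
  assumes "RDP le" "le 0 a1" "le 0 a2" "le 0 b1" "le 0 b2" "a1 + a2 = b1 + b2"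
  shows "\<exists>c11 c12 c21 c22. le 0 c11 \<and> le 0 c12 \<and> le 0 c21 \<and> le 0 c22 \<and>
           a1 = c11 + c12 \<and> a2 = c21 + c22 \<and> b1 = c11 + c21 \<and> b2 = c12 + c22"
  using assms unfolding RDP_def pos_cone_def by blast

lemma P:
  fixes le :: "'a::group_add \<Rightarrow> 'a \<Rightarrow> bool"
  assumes po: "po_group le" and dir: "directed le" and rdp: "RDP le"
    and "le 0 g1" "le 0 h1" and sum: "g1 + g2 = h1 + h2"
  shows "\<exists>x11 x12 x21 x22. decomp g1 g2 h1 h2 x11 x12 x21 x22 \<and> le 0 x11 \<and> le 0 x12 \<and> le 0 x21"
proof -
  obtain w where w: "le g1 w" "le h1 w" using dir unfolding directed_def by blast
  have u: "le 0 (-g1 + w)" and v: "le 0 (-h1 + w)" using w le_iff_pos[OF po, THEN iffD1] by auto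
  have "g1 + (-g1 + w) = h1 + (-h1 + w)" by (simp add: add.assoc[symmetric])
  then obtain c11 c12 c21 c22 where c: "le 0 c11" "le 0 c12" "le 0 c21" "le 0 c22"
    "g1 = c11 + c12" "-g1 + w = c21 + c22" "h1 = c11 + c21" "-h1 + w = c12 + c22"
    using RDP_D[OF rdp \<open>le 0 g1\<close> u \<open>le 0 h1\<close> v] by blast
  have e1: "c11 + c12 + (c21 + c22) = w" unfolding c(5)[symmetric] c(6)[symmetric] by simp
  have e2: "c11 + c21 + (c12 + c22) = w" unfolding c(7)[symmetric] c(8)[symmetric] by simp
  have "c11 + c12 + (c21 + c22) = c11 + c21 + (c12 + c22)" using e1 e2 by simp
  then have cm: "c12 + c21 = c21 + c12" by (rule cancel4)
  have "decomp g1 g2 h1 h2 c11 c12 c21 (-c21 + g2)" by (rule complete[OF sum c(5) c(7) cm])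
  then show ?thesis using c(1-3) by blast
qed

lemma P':
  fixes le :: "'a::group_add \<Rightarrow> 'a \<Rightarrow> bool"
  assumes po: "po_group le" and dir: "directed le" and rdp: "RDP le"
    and "le 0 g2" "le 0 h2" and sum: "g1 + g2 = h1 + h2"
  shows "\<exists>x11 x12 x21 x22. decomp g1 g2 h1 h2 x11 x12 x21 x22 \<and> le 0 x12 \<and> le 0 x21 \<and> le 0 x22"
proof -
  obtain w where w: "le g2 w" "le h2 w" using dir unfolding directed_def by blast
  have u: "le 0 (w - g2)" and v: "le 0 (w - h2)" using w le_iff_pos'[OF po, THEN iffD1] by auto
  have "(w - g2) + g2 = (w - h2) + h2" by simp
  then obtain c11 c12 c21 c22 where c: "le 0 c11" "le 0 c12" "le 0 c21" "le 0 c22"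
    "w - g2 = c11 + c12" "g2 = c21 + c22" "w - h2 = c11 + c21" "h2 = c12 + c22"
    using RDP_D[OF rdp u \<open>le 0 g2\<close> v \<open>le 0 h2\<close>] by blast
  have e1: "c11 + c12 + (c21 + c22) = w" unfolding c(5)[symmetric] c(6)[symmetric] by simp
  have e2: "c11 + c21 + (c12 + c22) = w" unfolding c(7)[symmetric] c(8)[symmetric] by simp
  have "c11 + c12 + (c21 + c22) = c11 + c21 + (c12 + c22)" using e1 e2 by simp
  then have cm: "c12 + c21 = c21 + c12" by (rule cancel4)
  have "decomp g1 g2 h1 h2 (g1 - c12) c12 c21 c22" by (rule complete'[OF sum c(6) c(8) cm])
  then show ?thesis using c(2-4) by blast
qed

lemma Q:
  fixes le :: "'a::group_add \<Rightarrow> 'a \<Rightarrow> bool"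
  assumes po: "po_group le" and dir: "directed le" and rdp: "RDP le"
    and sum: "g1 + g2 = h1 + h2"
  shows "\<exists>x11 x12 x21 x22. decomp g1 g2 h1 h2 x11 x12 x21 x22 \<and> le 0 x12 \<and> le 0 x21"
proof -
  obtain w where w: "le (-g1) w" "le (-h1) w" using dir unfolding directed_def by blast
  have a1: "le (-w) g1" using le_neg[OF po w(1)] by simp
  have a2: "le (-w) h1" using le_neg[OF po w(2)] by simp
  have a: "le 0 (w + g1)" "le 0 (w + h1)"
    using le_iff_pos[OF po, of "-w" g1] le_iff_pos[OF po, of "-w" h1] a1 a2 by simp_all
  have "(w + g1) + g2 = (w + h1) + h2" using sum by (simp add: add.assoc)
  then obtain y11 y12 y21 y22 where y: "decomp (w + g1) g2 (w + h1) h2 y11 y12 y21 y22"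
    "le 0 y12" "le 0 y21"
    using P[OF po dir rdp a] by blast
  from y(1) have d: "w + g1 = y11 + y12" "g2 = y21 + y22" "w + h1 = y11 + y21" "h2 = y12 + y22"
    by (simp_all add: decomp_def)
  have "g1 = -w + (w + g1)" by (simp add: add.assoc[symmetric])
  then have d1: "g1 = -w + y11 + y12" using d(1) by (simp add: add.assoc)
  have "h1 = -w + (w + h1)" by (simp add: add.assoc[symmetric])
  then have d3: "h1 = -w + y11 + y21" using d(3) by (simp add: add.assoc)
  have "decomp g1 g2 h1 h2 (-w + y11) y12 y21 y22"
    unfolding decomp_def using d1 d3 d(2,4) by blast
  then show ?thesis using y by blast
qed

lemma pos_lex: "(k::int) \<ge> 0 \<Longrightarrow> (k = 0 \<longrightarrow> le 0 x) \<Longrightarrow> (k, x) \<in> pos_cone (lex_le le)"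
  by (cases "k = 0") (auto simp: pos_cone_def lex_le_def)

lemma assemble:
  assumes "decomp g1 g2 h1 h2 x11 x12 x21 x22"
    "m1 = ka + kb" "m2 = kc + kd" "n1 = ka + kc" "n2 = kb + kd"
    "ka \<ge> 0" "kb \<ge> 0" "kc \<ge> 0" "kd \<ge> 0"
    "ka = 0 \<longrightarrow> le 0 x11" "kb = 0 \<longrightarrow> le 0 x12" "kc = 0 \<longrightarrow> le 0 x21" "kd = 0 \<longrightarrow> le 0 x22"
  shows "\<exists>c11 c12 c21 c22.
           c11 \<in> pos_cone (lex_le le) \<and> c12 \<in> pos_cone (lex_le le) \<and>
           c21 \<in> pos_cone (lex_le le) \<and> c22 \<in> pos_cone (lex_le le) \<and>
           (m1::int, g1) = c11 + c12 \<and> (m2, g2) = c21 + c22 \<and>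
           (n1, h1) = c11 + c21 \<and> (n2, h2) = c12 + c22"
  apply (rule exI[of _ "(ka, x11)"], rule exI[of _ "(kb, x12)"],
         rule exI[of _ "(kc, x21)"], rule exI[of _ "(kd, x22)"])
  using assms pos_lex[of ka le x11] pos_lex[of kb le x12] pos_lex[of kc le x21] pos_lex[of kd le x22]
  unfolding decomp_def by simp


lemma lexpos: "p \<in> pos_cone (lex_le le) \<longleftrightarrow> (0 < fst p \<or> (fst p = 0 \<and> le 0 (snd p)))"
  by (auto simp: pos_cone_def lex_le_def)

lemma core:
  fixes le :: "'a::group_add \<Rightarrow> 'a \<Rightarrow> bool"
  assumes po: "po_group le" and dir: "directed le" and rdp: "RDP le"
    and p1: "m1 \<ge> 0" "m1 = 0 \<longrightarrow> le 0 g1"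
    and p2: "m2 \<ge> 0" "m2 = 0 \<longrightarrow> le 0 g2"
    and q1: "n1 \<ge> 0" "n1 = 0 \<longrightarrow> le 0 h1"
    and q2: "n2 \<ge> 0" "n2 = 0 \<longrightarrow> le 0 h2"
    and ms: "m1 + m2 = n1 + n2" and gs: "g1 + g2 = h1 + h2"
  shows "\<exists>c11 c12 c21 c22.
           c11 \<in> pos_cone (lex_le le) \<and> c12 \<in> pos_cone (lex_le le) \<and>
           c21 \<in> pos_cone (lex_le le) \<and> c22 \<in> pos_cone (lex_le le) \<and>
           (m1::int, g1) = c11 + c12 \<and> (m2, g2) = c21 + c22 \<and>
           (n1, h1) = c11 + c21 \<and> (n2, h2) = c12 + c22"
proof (cases "m1 = 0 \<and> m2 = 0")
  case True
  then have n: "n1 = 0" "n2 = 0" using ms q1(1) q2(1) by auto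
  have pos: "le 0 g1" "le 0 g2" "le 0 h1" "le 0 h2" using True n p1 p2 q1 q2 by auto
  obtain c11 c12 c21 c22 where c: "le 0 c11" "le 0 c12" "le 0 c21" "le 0 c22"
    "g1 = c11 + c12" "g2 = c21 + c22" "h1 = c11 + c21" "h2 = c12 + c22"
    using RDP_D[OF rdp pos gs] by blast
  have d: "decomp g1 g2 h1 h2 c11 c12 c21 c22" using c unfolding decomp_def by blast
  show ?thesis
    by (rule assemble[OF d, where ka=0 and kb=0 and kc=0 and kd=0]) (use True n c in auto)
next
  case False
  show ?thesis
  proof (cases "m1 = 0")
    case m1: True
    with False have m2: "m2 > 0" using p2 by auto
    have g1: "le 0 g1" using m1 p1 by auto
    consider "n1 > 0" "n2 > 0" | "n1 = 0" | "n2 = 0" using q1(1) q2(1) by linarith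
    then show ?thesis
    proof cases
      case 1
      show ?thesis
        by (rule assemble[OF L0[OF gs], where ka=0 and kb=0 and kc=n1 and kd=n2])
          (use 1 m1 m2 g1 ms po_refl[OF po] in auto)
    next
      case 2
      then have h1: "le 0 h1" using q1 by auto
      obtain x11 x12 x21 x22 where x: "decomp g1 g2 h1 h2 x11 x12 x21 x22" "le 0 x11" "le 0 x12" "le 0 x21"
        using P[OF po dir rdp g1 h1 gs] by blast
      show ?thesis
        by (rule assemble[OF x(1), where ka=0 and kb=0 and kc=0 and kd=n2])
          (use 2 m1 m2 ms x in auto)
    next
      case 3
      then have h2: "le 0 h2" using q2 by auto
      show ?thesis
        by (rule assemble[OF L0[OF gs], where ka=0 and kb=0 and kc=n1 and kd=0])
          (use 3 m1 m2 g1 h2 ms po_refl[OF po] in auto)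
    qed
  next
    case m1: False
    then have m1p: "m1 > 0" using p1 by auto
    show ?thesis
    proof (cases "m2 = 0")
      case m2: True
      have g2: "le 0 g2" using m2 p2 by auto
      consider "n1 > 0" "n2 > 0" | "n1 = 0" | "n2 = 0" using q1(1) q2(1) by linarith
      then show ?thesis
      proof cases
        case 1
        show ?thesis
          by (rule assemble[OF L0'[OF gs], where ka=n1 and kb=n2 and kc=0 and kd=0])
            (use 1 m1p m2 g2 ms po_refl[OF po] in auto)
      next
        case 2
        then have h1: "le 0 h1" using q1 by auto
        show ?thesis
          by (rule assemble[OF L0'[OF gs], where ka=0 and kb=n2 and kc=0 and kd=0])
            (use 2 m1p m2 g2 h1 ms po_refl[OF po] in auto)
      next
        case 3
        then have h2: "le 0 h2" using q2 by auto
        obtain x11 x12 x21 x22 where x: "decomp g1 g2 h1 h2 x11 x12 x21 x22" "le 0 x12" "le 0 x21" "le 0 x22"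
          using P'[OF po dir rdp g2 h2 gs] by blast
        show ?thesis
          by (rule assemble[OF x(1), where ka=n1 and kb=0 and kc=0 and kd=0])
            (use 3 m1p m2 ms x in auto)
      qed
    next
      case m2: False
      then have m2p: "m2 > 0" using p2 by auto
      consider "n1 > 0" "n2 > 0" | "n1 = 0" | "n2 = 0" using q1(1) q2(1) by linarith
      then show ?thesis
      proof cases
        case 1
        obtain x11 x12 x21 x22 where x: "decomp g1 g2 h1 h2 x11 x12 x21 x22" "le 0 x12" "le 0 x21"
          using Q[OF po dir rdp gs] by blast
        show ?thesis
        proof (cases "m1 \<le> n1")
          case True
          show ?thesis
            by (rule assemble[OF x(1), where ka=m1 and kb=0 and kc="n1 - m1" and kd=n2])
              (use True 1 m1p m2p ms x in auto)
        next
          case False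
          show ?thesis
            by (rule assemble[OF x(1), where ka=n1 and kb="m1 - n1" and kc=0 and kd=m2])
              (use False 1 m1p m2p ms x in auto)
        qed
      next
        case 2
        then have h1: "le 0 h1" using q1 by auto
        show ?thesis
          by (rule assemble[OF L0'[OF gs], where ka=0 and kb=m1 and kc=0 and kd=m2])
            (use 2 m1p m2p h1 ms po_refl[OF po] in auto)
      next
        case 3
        then have h2: "le 0 h2" using q2 by auto
        show ?thesis
          by (rule assemble[OF L0[OF gs], where ka=m1 and kb=0 and kc=m2 and kd=0])
            (use 3 m1p m2p h2 ms po_refl[OF po] in auto)
      qed
    qed
  qed
qed

lemma backward:
  fixes le :: "'a::group_add \<Rightarrow> 'a \<Rightarrow> bool"
  assumes po: "po_group le" and dir: "directed le" and rdp: "RDP le"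
  shows "RDP (lex_le le)"
  unfolding RDP_def
proof (intro allI impI, elim conjE)
  fix a1 a2 b1 b2 :: "int \<times> 'a"
  assume pa1: "a1 \<in> pos_cone (lex_le le)" and pa2: "a2 \<in> pos_cone (lex_le le)"
    and pb1: "b1 \<in> pos_cone (lex_le le)" and pb2: "b2 \<in> pos_cone (lex_le le)"
    and s: "a1 + a2 = b1 + b2"
  obtain m1 g1 where a1: "a1 = (m1, g1)" by (cases a1)
  obtain m2 g2 where a2: "a2 = (m2, g2)" by (cases a2)
  obtain n1 h1 where b1: "b1 = (n1, h1)" by (cases b1)
  obtain n2 h2 where b2: "b2 = (n2, h2)" by (cases b2)
  have P1: "m1 \<ge> 0" "m1 = 0 \<longrightarrow> le 0 g1" using pa1 unfolding a1 lexpos by auto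
  have P2: "m2 \<ge> 0" "m2 = 0 \<longrightarrow> le 0 g2" using pa2 unfolding a2 lexpos by auto
  have Q1: "n1 \<ge> 0" "n1 = 0 \<longrightarrow> le 0 h1" using pb1 unfolding b1 lexpos by auto
  have Q2: "n2 \<ge> 0" "n2 = 0 \<longrightarrow> le 0 h2" using pb2 unfolding b2 lexpos by auto
  have ms: "m1 + m2 = n1 + n2" and gs: "g1 + g2 = h1 + h2" using s unfolding a1 a2 b1 b2 by auto
  show "\<exists>c11 c12 c21 c22.
           c11 \<in> pos_cone (lex_le le) \<and> c12 \<in> pos_cone (lex_le le) \<and>
           c21 \<in> pos_cone (lex_le le) \<and> c22 \<in> pos_cone (lex_le le) \<and>
           a1 = c11 + c12 \<and> a2 = c21 + c22 \<and> b1 = c11 + c21 \<and> b2 = c12 + c22"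
    unfolding a1 a2 b1 b2 by (rule core[OF po dir rdp P1 P2 Q1 Q2 ms gs])
qed

lemma lex_RDP_D:
  assumes "RDP (lex_le le)" "a1 \<in> pos_cone (lex_le le)" "a2 \<in> pos_cone (lex_le le)"
    "b1 \<in> pos_cone (lex_le le)" "b2 \<in> pos_cone (lex_le le)" "a1 + a2 = b1 + b2"
  shows "\<exists>c11 c12 c21 c22.
           c11 \<in> pos_cone (lex_le le) \<and> c12 \<in> pos_cone (lex_le le) \<and>
           c21 \<in> pos_cone (lex_le le) \<and> c22 \<in> pos_cone (lex_le le) \<and>
           a1 = c11 + c12 \<and> a2 = c21 + c22 \<and> b1 = c11 + c21 \<and> b2 = c12 + c22"
  using assms unfolding RDP_def by blast

lemma fwd_RDP:
  fixes le :: "'a::group_add \<Rightarrow> 'a \<Rightarrow> bool"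
  assumes R: "RDP (lex_le le)"
  shows "RDP le"
  unfolding RDP_def
proof (intro allI impI, elim conjE)
  fix a1 a2 b1 b2 :: 'a
  assume pa1: "a1 \<in> pos_cone le" and pa2: "a2 \<in> pos_cone le"
    and pb1: "b1 \<in> pos_cone le" and pb2: "b2 \<in> pos_cone le" and s: "a1 + a2 = b1 + b2"
  have pp: "(0::int, x) \<in> pos_cone (lex_le le)" if "x \<in> pos_cone le" for x
    using that unfolding lexpos by (simp add: pos_cone_def)
  have "(0::int, a1) + (0, a2) = (0, b1) + (0, b2)" using s by simp
  then obtain c11 c12 c21 c22 where c:
    "c11 \<in> pos_cone (lex_le le)" "c12 \<in> pos_cone (lex_le le)"
    "c21 \<in> pos_cone (lex_le le)" "c22 \<in> pos_cone (lex_le le)"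
    "(0, a1) = c11 + c12" "(0, a2) = c21 + c22" "(0, b1) = c11 + c21" "(0, b2) = c12 + c22"
    using lex_RDP_D[OF R pp[OF pa1] pp[OF pa2] pp[OF pb1] pp[OF pb2]] by blast
  have f: "fst c11 \<ge> 0" "fst c12 \<ge> 0" "fst c21 \<ge> 0" "fst c22 \<ge> 0"
    using c(1-4) unfolding lexpos by auto
  have e: "fst c11 + fst c12 = 0" "fst c21 + fst c22 = 0"
    using arg_cong[OF c(5), of fst] arg_cong[OF c(6), of fst] by auto
  have z: "fst c11 = 0" "fst c12 = 0" "fst c21 = 0" "fst c22 = 0" using e f by auto
  have sp: "snd c11 \<in> pos_cone le" "snd c12 \<in> pos_cone le" "snd c21 \<in> pos_cone le" "snd c22 \<in> pos_cone le"
    using c(1-4) z unfolding lexpos by (auto simp: pos_cone_def)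
  have se: "a1 = snd c11 + snd c12" "a2 = snd c21 + snd c22" "b1 = snd c11 + snd c21" "b2 = snd c12 + snd c22"
    using arg_cong[OF c(5), of snd] arg_cong[OF c(6), of snd] arg_cong[OF c(7), of snd] arg_cong[OF c(8), of snd]
    by auto
  show "\<exists>c11 c12 c21 c22.
           c11 \<in> pos_cone le \<and> c12 \<in> pos_cone le \<and>
           c21 \<in> pos_cone le \<and> c22 \<in> pos_cone le \<and>
           a1 = c11 + c12 \<and> a2 = c21 + c22 \<and> b1 = c11 + c21 \<and> b2 = c12 + c22"
    using sp se by blast
qed

lemma lowbound:
  fixes le :: "'a::group_add \<Rightarrow> 'a \<Rightarrow> bool"
  assumes po: "po_group le" and R: "RDP (lex_le le)"
  shows "\<exists>l. le l 0 \<and> le l g"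
proof -
  have p1: "(1::int, x) \<in> pos_cone (lex_le le)" for x unfolding lexpos by simp
  have "(1::int, g) + (1, -g) = (1, 0) + (1, 0)" by simp
  then obtain c11 c12 c21 c22 where c:
    "c11 \<in> pos_cone (lex_le le)" "c12 \<in> pos_cone (lex_le le)"
    "c21 \<in> pos_cone (lex_le le)" "c22 \<in> pos_cone (lex_le le)"
    "(1, g) = c11 + c12" "(1, -g) = c21 + c22" "(1, 0) = c11 + c21" "(1, 0) = c12 + c22"
    using lex_RDP_D[OF R p1 p1 p1 p1] by blast
  have f: "fst c11 \<ge> 0" "fst c12 \<ge> 0" "fst c21 \<ge> 0" "fst c22 \<ge> 0"
    using c(1-4) unfolding lexpos by auto
  have e: "fst c11 + fst c12 = 1" "fst c11 + fst c21 = 1" "fst c12 + fst c22 = 1"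
    using arg_cong[OF c(5), of fst] arg_cong[OF c(7), of fst] arg_cong[OF c(8), of fst] by auto
  have se: "g = snd c11 + snd c12" "0 = snd c11 + snd c21" "0 = snd c12 + snd c22"
    using arg_cong[OF c(5), of snd] arg_cong[OF c(7), of snd] arg_cong[OF c(8), of snd] by auto
  show ?thesis
  proof (cases "fst c11 = 0")
    case True
    then have "fst c22 = 0" using e by auto
    then have pos: "le 0 (snd c11)" "le 0 (snd c22)" using c(1,4) True unfolding lexpos by auto
    have "le (0 + snd c12) (snd c11 + snd c12)" by (rule po_monor[OF po pos(1)])
    then have l1: "le (snd c12) g" using se by simp
    have "le (snd c12 + 0) (snd c12 + snd c22)" by (rule po_monol[OF po pos(2)])
    then have l2: "le (snd c12) 0" using se by simp
    show ?thesis using l1 l2 by blast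
  next
    case False
    then have "fst c12 = 0" "fst c21 = 0" using e f by auto
    then have pos: "le 0 (snd c12)" "le 0 (snd c21)" using c(2,3) unfolding lexpos by auto
    have "le (snd c11 + 0) (snd c11 + snd c12)" by (rule po_monol[OF po pos(1)])
    then have l1: "le (snd c11) g" using se by simp
    have "le (snd c11 + 0) (snd c11 + snd c21)" by (rule po_monol[OF po pos(2)])
    then have l2: "le (snd c11) 0" using se by simp
    show ?thesis using l1 l2 by blast
  qed
qed

lemma fwd_dir:
  fixes le :: "'a::group_add \<Rightarrow> 'a \<Rightarrow> bool"
  assumes po: "po_group le" and R: "RDP (lex_le le)"
  shows "directed le"
  unfolding directed_def
proof (intro allI)
  fix a b :: 'a
  obtain l where l: "le l 0" "le l (-a + b)" using lowbound[OF po R] by blast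
  have "le (-0) (-l)" by (rule le_neg[OF po l(1)])
  then have nl: "le 0 (-l)" by simp
  have "le (b + 0) (b + -l)" by (rule po_monol[OF po nl])
  then have u1: "le b (b - l)" by simp
  have "le (a + l) (a + (-a + b))" by (rule po_monol[OF po l(2)])
  then have "le (a + l) b" by (simp add: add.assoc[symmetric])
  then have "le (a + l + -l) (b + -l)" by (rule po_monor[OF po])
  then have u2: "le a (b - l)" by (simp add: add.assoc)
  show "\<exists>c. le a c \<and> le b c" using u1 u2 by blast
qed

theorem theorem3p10:
  fixes le :: "'a::group_add \<Rightarrow> 'a \<Rightarrow> bool"
  assumes "po_group le"
  shows "RDP (lex_le le) \<longleftrightarrow> directed le \<and> RDP le"
  using assms fwd_RDP fwd_dir backward by blast

end
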